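(* Finite pseudo-orthomodular posets are precisely the complement-closed and doubly dense subsets of finite orthomodular lattices. That is: (a) every finite pseudo-orthomodular poset is isomorphic (as a poset with complementation) to a complement-closed and doubly dense subset of some finite orthomodular lattice, with the induced order and complementation; and (b) if $X$ is a complement-closed and doubly dense subset of a finite orthomodular lattice, then $X$ with the induced order and complementation is a (finite) pseudo-orthomodular poset.
   Context: For a poset and $M$ a subset, $U(M)$, $L(M)$ denote the sets of upper and lower bounds; $U(a,b)=U(\{a,b\})$ etc. A poset with complementation is a bounded poset $(P,\le,{}',0,1)$ with antitone involution $'$ ($x\le y\Rightarrow y'\le x'$, $x''=x$) such that $L(x,x')=\{0\}$, $U(x,x')=\{1\}$; it is pseudo-orthomodular if $L(U(L(x,y),y'),y)=L(x,y)$ for all $x,y$. A lattice with complementation is orthomodular if $x\vee y=((x\vee y)\wedge y')\vee y$ for all $x,y$. For a poset with complementation $\mathbf Q=(Q,\le,{}',0,1)$, a subset $X\subseteq Q$ is complement-closed and doubly dense in $\mathbf Q$ if: for every $a\in Q$, $a=\bigvee_{\mathbf Q}(L(a)\cap X)=\bigwedge_{\mathbf Q}(U(a)\cap X)$; $x\in X$ implies $x'\in X$; and $0,1\in X$. *)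

theory Defs
  imports Main
begin

text \<open>Posets are given by an explicit carrier set P and an order relation le
 (only its behaviour on P matters).\<close>

definition ubs :: "'a set \<Rightarrow> ('a \<Rightarrow> 'a \<Rightarrow> bool) \<Rightarrow> 'a set \<Rightarrow> 'a set" where
  "ubs P le M = {x \<in> P. \<forall>m\<in>M. le m x}"

definition lbs :: "'a set \<Rightarrow> ('a \<Rightarrow> 'a \<Rightarrow> bool) \<Rightarrow> 'a set \<Rightarrow> 'a set" where
  "lbs P le M = {x \<in> P. \<forall>m\<in>M. le x m}"

definition is_sup :: "'a set \<Rightarrow> ('a \<Rightarrow> 'a \<Rightarrow> bool) \<Rightarrow> 'a set \<Rightarrow> 'a \<Rightarrow> bool" where
  "is_sup P le M a \<longleftrightarrow> a \<in> ubs P le M \<and> (\<forall>u\<in>ubs P le M. le a u)"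

definition is_inf :: "'a set \<Rightarrow> ('a \<Rightarrow> 'a \<Rightarrow> bool) \<Rightarrow> 'a set \<Rightarrow> 'a \<Rightarrow> bool" where
  "is_inf P le M a \<longleftrightarrow> a \<in> lbs P le M \<and> (\<forall>l\<in>lbs P le M. le l a)"

definition jn :: "'a set \<Rightarrow> ('a \<Rightarrow> 'a \<Rightarrow> bool) \<Rightarrow> 'a \<Rightarrow> 'a \<Rightarrow> 'a" where
  "jn P le x y = (THE a. is_sup P le {x, y} a)"

definition mt :: "'a set \<Rightarrow> ('a \<Rightarrow> 'a \<Rightarrow> bool) \<Rightarrow> 'a \<Rightarrow> 'a \<Rightarrow> 'a" where
  "mt P le x y = (THE a. is_inf P le {x, y} a)"

definition partial_order_on' :: "'a set \<Rightarrow> ('a \<Rightarrow> 'a \<Rightarrow> bool) \<Rightarrow> bool" where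
  "partial_order_on' P le \<longleftrightarrow>
     (\<forall>x\<in>P. le x x) \<and>
     (\<forall>x\<in>P. \<forall>y\<in>P. le x y \<and> le y x \<longrightarrow> x = y) \<and>
     (\<forall>x\<in>P. \<forall>y\<in>P. \<forall>w\<in>P. le x y \<and> le y w \<longrightarrow> le x w)"

definition poset_compl :: "'a set \<Rightarrow> ('a \<Rightarrow> 'a \<Rightarrow> bool) \<Rightarrow> ('a \<Rightarrow> 'a) \<Rightarrow> 'a \<Rightarrow> 'a \<Rightarrow> bool" where
  "poset_compl P le c z t \<longleftrightarrow>
     partial_order_on' P le \<and> z \<in> P \<and> t \<in> P \<and>
     (\<forall>x\<in>P. le z x \<and> le x t) \<and>
     (\<forall>x\<in>P. c x \<in> P) \<and>
     (\<forall>x\<in>P. \<forall>y\<in>P. le x y \<longrightarrow> le (c y) (c x)) \<and>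
     (\<forall>x\<in>P. c (c x) = x) \<and>
     (\<forall>x\<in>P. lbs P le {x, c x} = {z} \<and> ubs P le {x, c x} = {t})"

definition pseudo_orthomodular :: "'a set \<Rightarrow> ('a \<Rightarrow> 'a \<Rightarrow> bool) \<Rightarrow> ('a \<Rightarrow> 'a) \<Rightarrow> 'a \<Rightarrow> 'a \<Rightarrow> bool" where
  "pseudo_orthomodular P le c z t \<longleftrightarrow>
     poset_compl P le c z t \<and>
     (\<forall>x\<in>P. \<forall>y\<in>P.
        lbs P le (ubs P le (lbs P le {x, y} \<union> {c y}) \<union> {y}) = lbs P le {x, y})"

definition lattice_compl :: "'a set \<Rightarrow> ('a \<Rightarrow> 'a \<Rightarrow> bool) \<Rightarrow> ('a \<Rightarrow> 'a) \<Rightarrow> 'a \<Rightarrow> 'a \<Rightarrow> bool" where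
  "lattice_compl P le c z t \<longleftrightarrow>
     poset_compl P le c z t \<and>
     (\<forall>x\<in>P. \<forall>y\<in>P. (\<exists>a. is_sup P le {x, y} a) \<and> (\<exists>a. is_inf P le {x, y} a))"

definition orthomodular_lattice :: "'a set \<Rightarrow> ('a \<Rightarrow> 'a \<Rightarrow> bool) \<Rightarrow> ('a \<Rightarrow> 'a) \<Rightarrow> 'a \<Rightarrow> 'a \<Rightarrow> bool" where
  "orthomodular_lattice P le c z t \<longleftrightarrow>
     lattice_compl P le c z t \<and>
     (\<forall>x\<in>P. \<forall>y\<in>P. jn P le x y = jn P le (mt P le (jn P le x y) (c y)) y)"

definition cc_doubly_dense :: "'a set \<Rightarrow> ('a \<Rightarrow> 'a \<Rightarrow> bool) \<Rightarrow> ('a \<Rightarrow> 'a) \<Rightarrow> 'a \<Rightarrow> 'a \<Rightarrow> 'a set \<Rightarrow> bool" where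
  "cc_doubly_dense Q le c z t X \<longleftrightarrow>
     X \<subseteq> Q \<and>
     (\<forall>a\<in>Q. is_sup Q le (lbs Q le {a} \<inter> X) a \<and> is_inf Q le (ubs Q le {a} \<inter> X) a) \<and>
     (\<forall>x\<in>X. c x \<in> X) \<and> z \<in> X \<and> t \<in> X"

end

theory Submission
  imports Defs
begin


locale pom =
  fixes P :: "'a set" and le :: "'a \<Rightarrow> 'a \<Rightarrow> bool" and c :: "'a \<Rightarrow> 'a" and z t :: 'a
  assumes pom: "pseudo_orthomodular P le c z t"
begin

abbreviation L where "L S \<equiv> lbs P le S"
abbreviation U where "U S \<equiv> ubs P le S"

lemma pc: "poset_compl P le c z t" using pom unfolding pseudo_orthomodular_def by blast

lemma refl: "x \<in> P \<Longrightarrow> le x x" using pc unfolding poset_compl_def partial_order_on'_def by blast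
lemma antisym: "x \<in> P \<Longrightarrow> y \<in> P \<Longrightarrow> le x y \<Longrightarrow> le y x \<Longrightarrow> x = y"
  using pc unfolding poset_compl_def partial_order_on'_def by blast
lemma trans: "x \<in> P \<Longrightarrow> y \<in> P \<Longrightarrow> w \<in> P \<Longrightarrow> le x y \<Longrightarrow> le y w \<Longrightarrow> le x w"
  using pc unfolding poset_compl_def partial_order_on'_def by blast
lemma zP: "z \<in> P" and tP: "t \<in> P" using pc unfolding poset_compl_def by auto
lemma zle: "x \<in> P \<Longrightarrow> le z x" and let_: "x \<in> P \<Longrightarrow> le x t" using pc unfolding poset_compl_def by auto
lemma cP: "x \<in> P \<Longrightarrow> c x \<in> P" using pc unfolding poset_compl_def by auto
lemma canti: "x \<in> P \<Longrightarrow> y \<in> P \<Longrightarrow> le x y \<Longrightarrow> le (c y) (c x)" using pc unfolding poset_compl_def by auto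
lemma cc: "x \<in> P \<Longrightarrow> c (c x) = x" using pc unfolding poset_compl_def by auto
lemma lbc: "x \<in> P \<Longrightarrow> L {x, c x} = {z}" using pc unfolding poset_compl_def by auto
lemma ubc: "x \<in> P \<Longrightarrow> U {x, c x} = {t}" using pc unfolding poset_compl_def by auto
lemma pomlaw: "x \<in> P \<Longrightarrow> y \<in> P \<Longrightarrow> L (U (L {x, y} \<union> {c y}) \<union> {y}) = L {x, y}"
  using pom unfolding pseudo_orthomodular_def by blast

lemma cle_iff: "x \<in> P \<Longrightarrow> y \<in> P \<Longrightarrow> le (c x) (c y) \<longleftrightarrow> le y x"
  by (metis canti cc cP)

lemma le_self_c: "x \<in> P \<Longrightarrow> le x (c x) \<Longrightarrow> x = z"
proof -
  assume x: "x \<in> P" and h: "le x (c x)"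
  have "x \<in> L {x, c x}" using x h refl unfolding lbs_def by auto
  thus ?thesis using lbc[OF x] by auto
qed

lemma cz: "c z = t"
proof -
  have "c z \<in> U {z, c z}" using zP cP refl zle unfolding ubs_def by auto
  thus ?thesis using ubc[OF zP] by auto
qed

lemma L_sub: "L S \<subseteq> P" unfolding lbs_def by auto
lemma U_sub: "U S \<subseteq> P" unfolding ubs_def by auto
lemma LU_ext: "S \<subseteq> P \<Longrightarrow> S \<subseteq> L (U S)" unfolding lbs_def ubs_def by auto
lemma UL_ext: "S \<subseteq> P \<Longrightarrow> S \<subseteq> U (L S)" unfolding lbs_def ubs_def by auto
lemma L_anti: "S \<subseteq> T \<Longrightarrow> L T \<subseteq> L S" unfolding lbs_def by auto
lemma U_anti: "S \<subseteq> T \<Longrightarrow> U T \<subseteq> U S" unfolding ubs_def by auto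
lemma LUL: "S \<subseteq> P \<Longrightarrow> L (U (L S)) = L S"
proof
  assume "S \<subseteq> P"
  show "L (U (L S)) \<subseteq> L S" unfolding lbs_def ubs_def using \<open>S \<subseteq> P\<close> by auto
  show "L S \<subseteq> L (U (L S))" by (rule LU_ext[OF L_sub])
qed

definition closed where "closed A \<longleftrightarrow> L (U A) = A"

lemma closed_sub: "closed A \<Longrightarrow> A \<subseteq> P" unfolding closed_def using L_sub by blast
lemma closed_L: "S \<subseteq> P \<Longrightarrow> closed (L S)" unfolding closed_def by (rule LUL)
lemma closed_down: "closed A \<Longrightarrow> x \<in> A \<Longrightarrow> y \<in> P \<Longrightarrow> le y x \<Longrightarrow> y \<in> A"
  unfolding closed_def lbs_def ubs_def
  by (smt (verit, best) mem_Collect_eq trans)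
lemma closed_z: "closed A \<Longrightarrow> z \<in> A"
  unfolding closed_def lbs_def using zP zle by (smt (verit) mem_Collect_eq ubs_def)
lemma closed_int: "closed A \<Longrightarrow> closed B \<Longrightarrow> closed (A \<inter> B)"
proof -
  assume a: "closed A" and b: "closed B"
  have "L (U (A \<inter> B)) \<subseteq> L (U A)" by (rule L_anti[OF U_anti]) auto
  moreover have "L (U (A \<inter> B)) \<subseteq> L (U B)" by (rule L_anti[OF U_anti]) auto
  ultimately have "L (U (A \<inter> B)) \<subseteq> A \<inter> B" using a b unfolding closed_def by auto
  moreover have "A \<inter> B \<subseteq> L (U (A \<inter> B))" using LU_ext closed_sub[OF a] by blast
  ultimately show ?thesis unfolding closed_def by blast
qed
lemma closed_LU_le: "closed A \<Longrightarrow> S \<subseteq> A \<Longrightarrow> L (U S) \<subseteq> A"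
  unfolding closed_def by (metis L_anti U_anti)

lemma mem_L: "v \<in> L S \<longleftrightarrow> v \<in> P \<and> (\<forall>s\<in>S. le v s)" unfolding lbs_def by auto
lemma mem_U: "v \<in> U S \<longleftrightarrow> v \<in> P \<and> (\<forall>s\<in>S. le s v)" unfolding ubs_def by auto

lemma U_compl: assumes A: "closed A" and x: "x \<in> P"
  shows "(\<forall>q\<in>L (c ` A). le q x) \<longleftrightarrow> c x \<in> A"
proof
  assume h: "\<forall>q\<in>L (c ` A). le q x"
  have "c x \<in> L (U A)"
  proof (unfold mem_L, intro conjI ballI)
    show "c x \<in> P" using cP x by auto
    fix r assume r: "r \<in> U A"
    have rP: "r \<in> P" using r mem_U by auto
    have "c r \<in> L (c ` A)" unfolding mem_L
    proof (intro conjI ballI)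
      show "c r \<in> P" using cP rP by auto
      fix s assume "s \<in> c ` A"
      then obtain a where a: "a \<in> A" "s = c a" by auto
      have aP: "a \<in> P" using a closed_sub[OF A] by auto
      have "le a r" using r a mem_U by auto
      thus "le (c r) s" using canti aP rP a by auto
    qed
    hence "le (c r) x" using h by auto
    thus "le (c x) r" using cle_iff cP rP x cc by metis
  qed
  thus "c x \<in> A" using A unfolding closed_def by auto
next
  assume h: "c x \<in> A"
  show "\<forall>q\<in>L (c ` A). le q x"
  proof
    fix q assume "q \<in> L (c ` A)"
    hence "le q (c (c x))" using h mem_L by auto
    thus "le q x" using cc x by auto
  qed
qed

lemma compl_closed_sub: "closed A \<Longrightarrow> x \<in> A \<Longrightarrow> q \<in> L (c ` A) \<Longrightarrow> le q (c x)"
  using mem_L by auto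

lemma Dlaw:
  assumes y: "y \<in> P" and d: "closed d" and dy: "\<forall>q\<in>d. le q y"
    and v: "v \<in> P" and vy: "le v y" and vw: "\<forall>w\<in>U (d \<union> {c y}). le v w"
  shows "v \<in> d"
proof -
  have "v \<in> L (U d)"
  proof (unfold mem_L, intro conjI ballI)
    show "v \<in> P" by fact
    fix m assume m: "m \<in> U d"
    have mP: "m \<in> P" using m mem_U by auto
    have "v \<in> L (U (L {m, y} \<union> {c y}) \<union> {y})"
    proof (unfold mem_L, intro conjI ballI)
      show "v \<in> P" by fact
      fix w assume w: "w \<in> U (L {m, y} \<union> {c y}) \<union> {y}"
      show "le v w"
      proof (cases "w = y")
        case True thus ?thesis using vy by simp
      next
        case False
        hence w': "w \<in> U (L {m, y} \<union> {c y})" using w by auto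
        have "d \<subseteq> L {m, y}" using m dy closed_sub[OF d] by (auto simp: lbs_def ubs_def)
        hence "w \<in> U (d \<union> {c y})" using w' unfolding mem_U by auto
        thus ?thesis using vw by auto
      qed
    qed
    hence "v \<in> L {m, y}" using pomlaw[OF mP y] by simp
    thus "le v m" using mem_L by auto
  qed
  thus ?thesis using d unfolding closed_def by simp
qed

lemma closed_finite: "finite P \<Longrightarrow> closed A \<Longrightarrow> finite A"
  using closed_sub finite_subset by blast

lemma nobad:
  assumes fin: "finite P"
  shows "closed A \<Longrightarrow> closed B \<Longrightarrow> A \<subseteq> B \<Longrightarrow> B \<inter> L (c ` A) \<subseteq> {z} \<Longrightarrow> B \<subseteq> A"
proof (induction "card A" arbitrary: A B rule: less_induct)
  case less
  note A = less.prems(1) and B = less.prems(2) and AB = less.prems(3) and bad = less.prems(4)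
  show ?case
  proof (cases "A \<subseteq> {z}")
    case True
    have "B \<subseteq> L (c ` A)"
    proof
      fix p assume p: "p \<in> B"
      have pP: "p \<in> P" using p closed_sub[OF B] by auto
      show "p \<in> L (c ` A)" unfolding mem_L using pP True cz let_ by auto
    qed
    thus ?thesis using bad closed_z[OF A] by auto
  next
    case False
    then obtain x0 where x0: "x0 \<in> A" "x0 \<noteq> z" by auto
    have x0P: "x0 \<in> P" using x0 closed_sub[OF A] by auto
    have cx0P: "c x0 \<in> P" using cP x0P by auto
    define A1 where "A1 = A \<inter> L {c x0}"
    define B1 where "B1 = B \<inter> L {c x0}"
    have A1c: "closed A1" unfolding A1_def by (rule closed_int[OF A closed_L]) (use cx0P in auto)
    have B1c: "closed B1" unfolding B1_def by (rule closed_int[OF B closed_L]) (use cx0P in auto)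
    have x0nA1: "x0 \<notin> A1"
      using le_self_c[OF x0P] x0(2) by (auto simp: A1_def lbs_def)
    have "card A1 < card A"
      by (rule psubset_card_mono) (use closed_finite[OF fin A] x0(1) x0nA1 A1_def in auto)
    moreover have "A1 \<subseteq> B1" using AB unfolding A1_def B1_def by auto
    moreover have "B1 \<inter> L (c ` A1) \<subseteq> {z}"
    proof
      fix p assume p: "p \<in> B1 \<inter> L (c ` A1)"
      have pP: "p \<in> P" and pB: "p \<in> B" and pcx: "le p (c x0)" and pA1: "p \<in> L (c ` A1)"
        using p by (auto simp: B1_def lbs_def)
      have "p \<in> L (c ` A)"
      proof (rule Dlaw[OF cx0P closed_L _ pP pcx])
        show "c ` A \<subseteq> P" using closed_sub[OF A] cP by auto
        show "\<forall>q\<in>L (c ` A). le q (c x0)" using x0(1) mem_L by auto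
        show "\<forall>w\<in>U (L (c ` A) \<union> {c (c x0)}). le p w"
        proof
          fix w assume w: "w \<in> U (L (c ` A) \<union> {c (c x0)})"
          have wP: "w \<in> P" using w mem_U by auto
          have "c w \<in> A" using U_compl[OF A wP] w unfolding mem_U by auto
          moreover have "le x0 w" using w cc[OF x0P] unfolding mem_U by auto
          hence "le (c w) (c x0)" using canti x0P wP by auto
          ultimately have "c w \<in> A1" using cP wP by (auto simp: A1_def lbs_def)
          hence "le p (c (c w))" using pA1 mem_L by auto
          thus "le p w" using cc wP by auto
        qed
      qed
      thus "p \<in> {z}" using bad pB by auto
    qed
    ultimately have B1A1: "B1 \<subseteq> A1" using less.hyps[OF _ A1c B1c] by blast
    show "B \<subseteq> A"
    proof
      fix v assume vB: "v \<in> B"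
      have vP: "v \<in> P" using vB closed_sub[OF B] by auto
      have "v \<in> L (U A)"
      proof (unfold mem_L, intro conjI ballI)
        show "v \<in> P" by fact
        fix u assume u: "u \<in> U A"
        have uP: "u \<in> P" using u mem_U by auto
        have "c u \<in> L (c ` B)"
        proof (rule Dlaw[OF cx0P closed_L _ cP[OF uP]])
          show "c ` B \<subseteq> P" using closed_sub[OF B] cP by auto
          show "\<forall>q\<in>L (c ` B). le q (c x0)" using x0(1) AB mem_L by auto
          show "le (c u) (c x0)" using canti x0P uP u x0(1) mem_U by auto
          show "\<forall>w\<in>U (L (c ` B) \<union> {c (c x0)}). le (c u) w"
          proof
            fix w assume w: "w \<in> U (L (c ` B) \<union> {c (c x0)})"
            have wP: "w \<in> P" using w mem_U by auto
            have "c w \<in> B" using U_compl[OF B wP] w unfolding mem_U by auto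
            moreover have "le x0 w" using w cc[OF x0P] unfolding mem_U by auto
            hence "le (c w) (c x0)" using canti x0P wP by auto
            ultimately have "c w \<in> B1" using cP wP by (auto simp: B1_def lbs_def)
            hence "c w \<in> A" using B1A1 A1_def by auto
            hence "le (c w) u" using u mem_U by auto
            thus "le (c u) w" using cle_iff[OF uP cP[OF wP]] cc[OF wP] by simp
          qed
        qed
        hence "le (c u) (c v)" using vB mem_L by auto
        thus "le v u" using cle_iff uP vP by auto
      qed
      thus "v \<in> A" using A unfolding closed_def by simp
    qed
  qed
qed


lemma cimg_sub: "closed A \<Longrightarrow> c ` A \<subseteq> P" using closed_sub cP by auto

lemma cQ_closed: "closed A \<Longrightarrow> closed (L (c ` A))" using closed_L cimg_sub by blast

lemma cQ_cQ: assumes A: "closed A" shows "L (c ` L (c ` A)) = A"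
proof
  show "L (c ` L (c ` A)) \<subseteq> A"
  proof
    fix x assume x: "x \<in> L (c ` L (c ` A))"
    have xP: "x \<in> P" using x mem_L by auto
    have "\<forall>q\<in>L (c ` A). le q (c x)"
    proof
      fix q assume q: "q \<in> L (c ` A)"
      have qP: "q \<in> P" using q mem_L by auto
      have "le x (c q)" using x q mem_L by auto
      hence "le (c (c q)) (c x)" using canti xP cP qP by auto
      thus "le q (c x)" using cc qP by simp
    qed
    hence "c (c x) \<in> A" using U_compl[OF A cP[OF xP]] by simp
    thus "x \<in> A" using cc xP by simp
  qed
  show "A \<subseteq> L (c ` L (c ` A))"
  proof
    fix x assume xA: "x \<in> A"
    have xP: "x \<in> P" using xA closed_sub[OF A] by auto
    have "\<forall>q\<in>L (c ` A). le q (c x)" using U_compl[OF A cP[OF xP]] cc xP xA by simp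
    thus "x \<in> L (c ` L (c ` A))" unfolding mem_L
      using xP cle_iff cc L_sub cP by (smt (verit, ccfv_threshold) imageE subsetD)
  qed
qed

lemma the_sup: "partial_order_on' Q le' \<Longrightarrow> is_sup Q le' M a \<Longrightarrow> (THE a. is_sup Q le' M a) = a"
  apply (rule the_equality, assumption)
  unfolding is_sup_def partial_order_on'_def ubs_def by blast
lemma the_inf: "partial_order_on' Q le' \<Longrightarrow> is_inf Q le' M a \<Longrightarrow> (THE a. is_inf Q le' M a) = a"
  apply (rule the_equality, assumption)
  unfolding is_inf_def partial_order_on'_def lbs_def by blast

definition "Qs = {A. closed A}"

lemma po_Q: "partial_order_on' Qs (\<subseteq>)" unfolding partial_order_on'_def by auto

lemma sup_Q: assumes A: "closed A" and B: "closed B"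
  shows "is_sup Qs (\<subseteq>) {A, B} (L (U (A \<union> B)))"
proof -
  have SP: "A \<union> B \<subseteq> P" using closed_sub A B by auto
  have "closed (L (U (A \<union> B)))" by (rule closed_L[OF U_sub])
  moreover have "A \<union> B \<subseteq> L (U (A \<union> B))" by (rule LU_ext[OF SP])
  moreover have "\<And>X. closed X \<Longrightarrow> A \<subseteq> X \<Longrightarrow> B \<subseteq> X \<Longrightarrow> L (U (A \<union> B)) \<subseteq> X"
    using closed_LU_le by auto
  ultimately show ?thesis unfolding is_sup_def Qs_def ubs_def by auto
qed

lemma inf_Q: "closed A \<Longrightarrow> closed B \<Longrightarrow> is_inf Qs (\<subseteq>) {A, B} (A \<inter> B)"
  unfolding is_inf_def lbs_def Qs_def using closed_int by auto

lemma jn_Q: "closed A \<Longrightarrow> closed B \<Longrightarrow> jn Qs (\<subseteq>) A B = L (U (A \<union> B))"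
  unfolding jn_def using the_sup[OF po_Q sup_Q] by blast
lemma mt_Q: "closed A \<Longrightarrow> closed B \<Longrightarrow> mt Qs (\<subseteq>) A B = A \<inter> B"
  unfolding mt_def using the_inf[OF po_Q inf_Q] by blast

lemma closed_P: "closed P"
  unfolding closed_def using LU_ext[of P] L_sub by auto
lemma closed_zs: "closed {z}"
proof -
  have "{z} = L {z}" using zP zle antisym unfolding lbs_def by auto
  moreover have "closed (L {z})" using closed_L zP by auto
  ultimately show ?thesis by simp
qed

lemma Lsing_closed: "x \<in> P \<Longrightarrow> closed (L {x})" using closed_L by auto

lemma cQ_princ: "x \<in> P \<Longrightarrow> L (c ` L {x}) = L {c x}"
proof
  assume x: "x \<in> P"
  show "L (c ` L {x}) \<subseteq> L {c x}"
    using x refl unfolding lbs_def by auto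
  show "L {c x} \<subseteq> L (c ` L {x})"
  proof
    fix p assume p: "p \<in> L {c x}"
    show "p \<in> L (c ` L {x})" unfolding mem_L
    proof (intro conjI ballI)
      show "p \<in> P" using p mem_L by auto
      fix s assume "s \<in> c ` L {x}"
      then obtain q where q: "q \<in> L {x}" "s = c q" by auto
      have "le (c x) (c q)" using canti q x unfolding lbs_def by auto
      thus "le p s" using trans p q x cP unfolding lbs_def by auto
    qed
  qed
qed

lemma OML_Q:
  assumes fin: "finite P" and A: "closed A" and B: "closed B"
  shows "jn Qs (\<subseteq>) A B = jn Qs (\<subseteq>) (mt Qs (\<subseteq>) (jn Qs (\<subseteq>) A B) (L (c ` B))) B"
proof -
  define S where "S = L (U (A \<union> B))"
  have SP: "A \<union> B \<subseteq> P" using closed_sub A B by auto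
  have Sc: "closed S" unfolding S_def by (rule closed_L[OF U_sub])
  have BS: "B \<subseteq> S" unfolding S_def using LU_ext[OF SP] by auto
  have B'c: "closed (L (c ` B))" by (rule cQ_closed[OF B])
  define C where "C = L (U ((S \<inter> L (c ` B)) \<union> B))"
  have CP: "(S \<inter> L (c ` B)) \<union> B \<subseteq> P" using closed_sub[OF Sc] closed_sub[OF B] by auto
  have Cc: "closed C" unfolding C_def by (rule closed_L[OF U_sub])
  have CS: "C \<subseteq> S" unfolding C_def using closed_LU_le[OF Sc] BS by auto
  have sub: "(S \<inter> L (c ` B)) \<union> B \<subseteq> C" unfolding C_def using LU_ext[OF CP] .
  have "S \<inter> L (c ` C) \<subseteq> {z}"
  proof
    fix p assume p: "p \<in> S \<inter> L (c ` C)"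
    have pP: "p \<in> P" using p closed_sub[OF Sc] by auto
    have "p \<in> L (c ` B)" using p sub unfolding lbs_def by auto
    hence "p \<in> C" using p sub by auto
    hence "le p (c p)" using p mem_L by auto
    thus "p \<in> {z}" using le_self_c pP by auto
  qed
  hence "S \<subseteq> C" using nobad[OF fin Cc Sc CS] by auto
  hence SC: "S = C" using CS by auto
  have "jn Qs (\<subseteq>) A B = S" unfolding S_def using jn_Q A B by auto
  moreover have "mt Qs (\<subseteq>) S (L (c ` B)) = S \<inter> L (c ` B)" using mt_Q Sc B'c by auto
  moreover have "jn Qs (\<subseteq>) (S \<inter> L (c ` B)) B = C" unfolding C_def
    using jn_Q closed_int[OF Sc B'c] B by auto
  ultimately show ?thesis using SC by simp
qed

lemma lbQ: assumes A: "closed A" shows "lbs Qs (\<subseteq>) {A, L (c ` A)} = {{z}}"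
proof -
  have key: "\<And>B. closed B \<Longrightarrow> B \<subseteq> A \<Longrightarrow> B \<subseteq> L (c ` A) \<Longrightarrow> B = {z}"
  proof -
    fix B assume B: "closed B" "B \<subseteq> A" "B \<subseteq> L (c ` A)"
    have "B \<subseteq> {z}"
    proof
      fix p assume p: "p \<in> B"
      have "le p (c p)" using p B mem_L by blast
      thus "p \<in> {z}" using le_self_c closed_sub[OF A] B p by auto
    qed
    thus "B = {z}" using closed_z[OF B(1)] by auto
  qed
  have zz: "{z} \<subseteq> A" "{z} \<subseteq> L (c ` A)" using closed_z A cQ_closed[OF A] by auto
  show ?thesis
  proof (intro set_eqI iffI)
    fix B assume "B \<in> lbs Qs (\<subseteq>) {A, L (c ` A)}"
    hence "closed B" "B \<subseteq> A" "B \<subseteq> L (c ` A)" unfolding lbs_def Qs_def by auto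
    thus "B \<in> {{z}}" using key by blast
  next
    fix B assume "B \<in> {{z}}"
    thus "B \<in> lbs Qs (\<subseteq>) {A, L (c ` A)}" using zz closed_zs by (auto simp: lbs_def Qs_def)
  qed
qed

lemma ubQ: assumes A: "closed A" shows "ubs Qs (\<subseteq>) {A, L (c ` A)} = {P}"
proof -
  have key: "\<And>B. closed B \<Longrightarrow> A \<subseteq> B \<Longrightarrow> L (c ` A) \<subseteq> B \<Longrightarrow> B = P"
  proof -
    fix B assume B: "closed B" "A \<subseteq> B" "L (c ` A) \<subseteq> B"
    have Ut: "\<And>u. u \<in> U B \<Longrightarrow> u = t"
    proof -
      fix u assume u: "u \<in> U B"
      have uP: "u \<in> P" using u mem_U by auto
      have "\<forall>q\<in>L (c ` A). le q u" using u B(3) mem_U by blast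
      hence cuA: "c u \<in> A" using U_compl[OF A uP] by simp
      have "c u \<in> L (c ` A)" unfolding mem_L
      proof (intro conjI ballI)
        show "c u \<in> P" using cP uP by auto
        fix s assume "s \<in> c ` A"
        then obtain a where a: "a \<in> A" "s = c a" by auto
        have "le a u" using u a B(2) mem_U by blast
        thus "le (c u) s" using a canti uP closed_sub[OF A] by auto
      qed
      hence "le (c u) u" using u B(3) mem_U by blast
      hence "c u = z" using le_self_c[OF cP[OF uP]] cc uP by simp
      thus "u = t" using cc uP cz by metis
    qed
    have "P \<subseteq> L (U B)" using Ut let_ unfolding lbs_def by auto
    thus "B = P" using B(1) closed_sub unfolding closed_def by auto
  qed
  have zz: "A \<subseteq> P" "L (c ` A) \<subseteq> P" using closed_sub A L_sub by auto
  show ?thesis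
  proof (intro set_eqI iffI)
    fix B assume "B \<in> ubs Qs (\<subseteq>) {A, L (c ` A)}"
    hence "closed B" "A \<subseteq> B" "L (c ` A) \<subseteq> B" unfolding ubs_def Qs_def by auto
    thus "B \<in> {P}" using key by blast
  next
    fix B assume "B \<in> {P}"
    thus "B \<in> ubs Qs (\<subseteq>) {A, L (c ` A)}" using zz closed_P by (auto simp: ubs_def Qs_def)
  qed
qed

lemma poset_compl_Q: "poset_compl Qs (\<subseteq>) (\<lambda>A. L (c ` A)) {z} P"
  unfolding poset_compl_def
proof (intro conjI ballI impI)
  show "partial_order_on' Qs (\<subseteq>)" by (rule po_Q)
  show "{z} \<in> Qs" "P \<in> Qs" using closed_zs closed_P Qs_def by auto
  fix A assume A: "A \<in> Qs"
  hence Ac: "closed A" by (simp add: Qs_def)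
  show "{z} \<subseteq> A" "A \<subseteq> P" using closed_z[OF Ac] closed_sub[OF Ac] by auto
  show "L (c ` A) \<in> Qs" using cQ_closed[OF Ac] Qs_def by auto
  show "L (c ` L (c ` A)) = A" by (rule cQ_cQ[OF Ac])
  show "lbs Qs (\<subseteq>) {A, L (c ` A)} = {{z}}" by (rule lbQ[OF Ac])
  show "ubs Qs (\<subseteq>) {A, L (c ` A)} = {P}" by (rule ubQ[OF Ac])
next
  fix A B assume "A \<in> Qs" "B \<in> Qs" "A \<subseteq> B"
  thus "L (c ` B) \<subseteq> L (c ` A)" by (intro L_anti image_mono)
qed

lemma OML_Qs: "finite P \<Longrightarrow> orthomodular_lattice Qs (\<subseteq>) (\<lambda>A. L (c ` A)) {z} P"
  unfolding orthomodular_lattice_def lattice_compl_def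
proof (intro conjI ballI)
  show "poset_compl Qs (\<subseteq>) (\<lambda>A. L (c ` A)) {z} P" by (rule poset_compl_Q)
next
  fix x y assume "x \<in> Qs" "y \<in> Qs"
  hence x: "closed x" and y: "closed y" by (auto simp: Qs_def)
  show "\<exists>a. is_sup Qs (\<subseteq>) {x, y} a" using sup_Q[OF x y] by blast
  show "\<exists>a. is_inf Qs (\<subseteq>) {x, y} a" using inf_Q[OF x y] by blast
next
  fix x y assume fin: "finite P" and "x \<in> Qs" "y \<in> Qs"
  hence x: "closed x" and y: "closed y" by (auto simp: Qs_def)
  show "jn Qs (\<subseteq>) x y = jn Qs (\<subseteq>) (mt Qs (\<subseteq>) (jn Qs (\<subseteq>) x y) (L (c ` y))) y"
    by (rule OML_Q[OF fin x y])
qed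

lemma dense_Qs: "cc_doubly_dense Qs (\<subseteq>) (\<lambda>A. L (c ` A)) {z} P ((\<lambda>x. L {x}) ` P)"
  unfolding cc_doubly_dense_def
proof (intro conjI ballI)
  show "(\<lambda>x. L {x}) ` P \<subseteq> Qs" using Lsing_closed Qs_def by auto
  show "{z} \<in> (\<lambda>x. L {x}) ` P"
  proof
    show "{z} = L {z}" using zP zle antisym unfolding lbs_def by auto
  qed (rule zP)
  show "P \<in> (\<lambda>x. L {x}) ` P"
  proof
    show "P = L {t}" using let_ unfolding lbs_def by auto
  qed (rule tP)
next
  fix A assume "A \<in> (\<lambda>x. L {x}) ` P"
  then obtain x where x: "x \<in> P" "A = L {x}" by auto
  thus "L (c ` A) \<in> (\<lambda>x. L {x}) ` P" using cQ_princ cP by auto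
next
  fix a assume "a \<in> Qs"
  hence a: "closed a" by (simp add: Qs_def)
  have aP: "a \<subseteq> P" using closed_sub[OF a] .
  show "is_sup Qs (\<subseteq>) (lbs Qs (\<subseteq>) {a} \<inter> (\<lambda>x. L {x}) ` P) a"
    unfolding is_sup_def
  proof (intro conjI ballI)
    show "a \<in> ubs Qs (\<subseteq>) (lbs Qs (\<subseteq>) {a} \<inter> (\<lambda>x. L {x}) ` P)"
      using a unfolding ubs_def lbs_def Qs_def by auto
    fix u assume u: "u \<in> ubs Qs (\<subseteq>) (lbs Qs (\<subseteq>) {a} \<inter> (\<lambda>x. L {x}) ` P)"
    show "a \<subseteq> u"
    proof
      fix x assume xa: "x \<in> a"
      have xP: "x \<in> P" using xa aP by auto
      have "L {x} \<subseteq> a" using closed_down[OF a xa] unfolding lbs_def by auto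
      hence "L {x} \<in> lbs Qs (\<subseteq>) {a} \<inter> (\<lambda>x. L {x}) ` P"
        using xP Lsing_closed unfolding lbs_def Qs_def by auto
      hence "L {x} \<subseteq> u" using u unfolding ubs_def by auto
      thus "x \<in> u" using xP refl unfolding lbs_def by auto
    qed
  qed
  show "is_inf Qs (\<subseteq>) (ubs Qs (\<subseteq>) {a} \<inter> (\<lambda>x. L {x}) ` P) a"
    unfolding is_inf_def
  proof (intro conjI ballI)
    show "a \<in> lbs Qs (\<subseteq>) (ubs Qs (\<subseteq>) {a} \<inter> (\<lambda>x. L {x}) ` P)"
      using a unfolding ubs_def lbs_def Qs_def by auto
    fix l assume l: "l \<in> lbs Qs (\<subseteq>) (ubs Qs (\<subseteq>) {a} \<inter> (\<lambda>x. L {x}) ` P)"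
    have "l \<subseteq> L (U a)"
    proof
      fix p assume pl: "p \<in> l"
      show "p \<in> L (U a)" unfolding mem_L
      proof (intro conjI ballI)
        show "p \<in> P" using pl l closed_sub unfolding lbs_def Qs_def by auto
        fix u assume u: "u \<in> U a"
        have uP: "u \<in> P" using u mem_U by auto
        have "a \<subseteq> L {u}" using u aP unfolding lbs_def ubs_def by auto
        hence "L {u} \<in> ubs Qs (\<subseteq>) {a} \<inter> (\<lambda>x. L {x}) ` P"
          using uP Lsing_closed a unfolding ubs_def Qs_def by auto
        hence "l \<subseteq> L {u}" using l unfolding lbs_def by auto
        thus "le p u" using pl unfolding lbs_def by auto
      qed
    qed
    thus "l \<subseteq> a" using a unfolding closed_def by simp
  qed
qed

theorem partA:
  assumes fin: "finite P"
  shows "\<exists>(Q :: 'a set set) leQ cQ zQ tQ X f.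
               finite Q \<and> orthomodular_lattice Q leQ cQ zQ tQ \<and>
               cc_doubly_dense Q leQ cQ zQ tQ X \<and>
               bij_betw f P X \<and>
               (\<forall>x\<in>P. \<forall>y\<in>P. le x y \<longleftrightarrow> leQ (f x) (f y)) \<and>
               (\<forall>x\<in>P. f (c x) = cQ (f x)) \<and> f z = zQ \<and> f t = tQ"
proof (intro exI conjI)
  show "finite Qs" using fin unfolding Qs_def
    by (rule finite_subset[rotated, OF finite_Pow_iff[THEN iffD2]]) (use closed_sub in auto)
  show "orthomodular_lattice Qs (\<subseteq>) (\<lambda>A. L (c ` A)) {z} P" by (rule OML_Qs[OF fin])
  show "cc_doubly_dense Qs (\<subseteq>) (\<lambda>A. L (c ` A)) {z} P ((\<lambda>x. L {x}) ` P)" by (rule dense_Qs)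
  show "bij_betw (\<lambda>x. L {x}) P ((\<lambda>x. L {x}) ` P)"
  proof (rule inj_on_imp_bij_betw, rule inj_onI)
    fix x y assume x: "x \<in> P" and y: "y \<in> P" and e: "L {x} = L {y}"
    have "x \<in> L {y}" "y \<in> L {x}" using e x y refl unfolding lbs_def by auto
    thus "x = y" using antisym x y unfolding lbs_def by auto
  qed
  show "\<forall>x\<in>P. \<forall>y\<in>P. le x y = (L {x} \<subseteq> L {y})"
  proof (intro ballI iffI)
    fix x y assume x: "x \<in> P" and y: "y \<in> P"
    { assume "le x y" thus "L {x} \<subseteq> L {y}" using trans x y unfolding lbs_def by blast }
    { assume "L {x} \<subseteq> L {y}" thus "le x y" using x refl unfolding lbs_def by auto }
  qed
  show "\<forall>x\<in>P. L {c x} = L (c ` L {x})" using cQ_princ by auto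
  show "L {z} = {z}" using zP zle antisym unfolding lbs_def by auto
  show "L {t} = P" using let_ unfolding lbs_def by auto
qed

end



locale lc =
  fixes Q :: "'b set" and le :: "'b \<Rightarrow> 'b \<Rightarrow> bool" and c :: "'b \<Rightarrow> 'b" and z t :: 'b
  assumes lcq: "lattice_compl Q le c z t"
begin

lemma pc: "poset_compl Q le c z t" using lcq unfolding lattice_compl_def by blast
lemma po: "partial_order_on' Q le" using pc unfolding poset_compl_def by blast
lemma refl: "x \<in> Q \<Longrightarrow> le x x" using po unfolding partial_order_on'_def by blast
lemma antisym: "x \<in> Q \<Longrightarrow> y \<in> Q \<Longrightarrow> le x y \<Longrightarrow> le y x \<Longrightarrow> x = y"
  using po unfolding partial_order_on'_def by blast
lemma trans: "x \<in> Q \<Longrightarrow> y \<in> Q \<Longrightarrow> w \<in> Q \<Longrightarrow> le x y \<Longrightarrow> le y w \<Longrightarrow> le x w"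
  using po unfolding partial_order_on'_def by blast
lemma zQ: "z \<in> Q" and tQ: "t \<in> Q" using pc unfolding poset_compl_def by auto
lemma zle: "x \<in> Q \<Longrightarrow> le z x" and let_: "x \<in> Q \<Longrightarrow> le x t" using pc unfolding poset_compl_def by auto
lemma cQ: "x \<in> Q \<Longrightarrow> c x \<in> Q" using pc unfolding poset_compl_def by auto
lemma canti: "x \<in> Q \<Longrightarrow> y \<in> Q \<Longrightarrow> le x y \<Longrightarrow> le (c y) (c x)" using pc unfolding poset_compl_def by auto
lemma cc: "x \<in> Q \<Longrightarrow> c (c x) = x" using pc unfolding poset_compl_def by auto
lemma lbc: "x \<in> Q \<Longrightarrow> lbs Q le {x, c x} = {z}" using pc unfolding poset_compl_def by auto
lemma ubc: "x \<in> Q \<Longrightarrow> ubs Q le {x, c x} = {t}" using pc unfolding poset_compl_def by auto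
lemma cle_iff: "x \<in> Q \<Longrightarrow> y \<in> Q \<Longrightarrow> le (c x) (c y) \<longleftrightarrow> le y x"
  by (metis canti cc cQ)

lemma sup_ex: "x \<in> Q \<Longrightarrow> y \<in> Q \<Longrightarrow> is_sup Q le {x, y} (jn Q le x y)"
proof -
  assume x: "x \<in> Q" and y: "y \<in> Q"
  obtain a where a: "is_sup Q le {x, y} a" using lcq x y unfolding lattice_compl_def by blast
  have "\<exists>!a. is_sup Q le {x, y} a"
  proof (rule ex1I[where P="\<lambda>a. is_sup Q le {x, y} a", OF a])
    fix b assume b: "is_sup Q le {x, y} b"
    show "b = a" using a b antisym unfolding is_sup_def ubs_def by auto
  qed
  thus ?thesis unfolding jn_def by (rule theI')
qed
lemma inf_ex: "x \<in> Q \<Longrightarrow> y \<in> Q \<Longrightarrow> is_inf Q le {x, y} (mt Q le x y)"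
proof -
  assume x: "x \<in> Q" and y: "y \<in> Q"
  obtain a where a: "is_inf Q le {x, y} a" using lcq x y unfolding lattice_compl_def by blast
  have "\<exists>!a. is_inf Q le {x, y} a"
  proof (rule ex1I[where P="\<lambda>a. is_inf Q le {x, y} a", OF a])
    fix b assume b: "is_inf Q le {x, y} b"
    show "b = a" using a b antisym unfolding is_inf_def lbs_def by auto
  qed
  thus ?thesis unfolding mt_def by (rule theI')
qed

lemma jnQ: "x \<in> Q \<Longrightarrow> y \<in> Q \<Longrightarrow> jn Q le x y \<in> Q"
  using sup_ex unfolding is_sup_def ubs_def by blast
lemma jn1: "x \<in> Q \<Longrightarrow> y \<in> Q \<Longrightarrow> le x (jn Q le x y)"
  using sup_ex unfolding is_sup_def ubs_def by blast
lemma jn2: "x \<in> Q \<Longrightarrow> y \<in> Q \<Longrightarrow> le y (jn Q le x y)"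
  using sup_ex unfolding is_sup_def ubs_def by blast
lemma jn_least: "x \<in> Q \<Longrightarrow> y \<in> Q \<Longrightarrow> u \<in> Q \<Longrightarrow> le x u \<Longrightarrow> le y u \<Longrightarrow> le (jn Q le x y) u"
  using sup_ex unfolding is_sup_def ubs_def by blast
lemma mtQ: "x \<in> Q \<Longrightarrow> y \<in> Q \<Longrightarrow> mt Q le x y \<in> Q"
  using inf_ex unfolding is_inf_def lbs_def by blast
lemma mt1: "x \<in> Q \<Longrightarrow> y \<in> Q \<Longrightarrow> le (mt Q le x y) x"
  using inf_ex unfolding is_inf_def lbs_def by blast
lemma mt2: "x \<in> Q \<Longrightarrow> y \<in> Q \<Longrightarrow> le (mt Q le x y) y"
  using inf_ex unfolding is_inf_def lbs_def by blast
lemma mt_greatest: "x \<in> Q \<Longrightarrow> y \<in> Q \<Longrightarrow> l \<in> Q \<Longrightarrow> le l x \<Longrightarrow> le l y \<Longrightarrow> le l (mt Q le x y)"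
  using inf_ex unfolding is_inf_def lbs_def by blast

lemma jn_comm: "jn Q le x y = jn Q le y x" unfolding jn_def by (simp add: insert_commute)

lemma jn_absorb: "x \<in> Q \<Longrightarrow> y \<in> Q \<Longrightarrow> le y x \<Longrightarrow> jn Q le x y = x"
  by (meson antisym jnQ jn1 jn_least refl)

lemma demorgan_jn: assumes x: "x \<in> Q" and y: "y \<in> Q"
  shows "c (jn Q le x y) = mt Q le (c x) (c y)"
proof (rule antisym)
  show "c (jn Q le x y) \<in> Q" "mt Q le (c x) (c y) \<in> Q" using cQ jnQ mtQ x y by auto
  show "le (c (jn Q le x y)) (mt Q le (c x) (c y))"
    using mt_greatest cQ jnQ x y canti jn1 jn2 by auto
  have m: "mt Q le (c x) (c y) \<in> Q" using mtQ cQ x y by auto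
  have "le x (c (mt Q le (c x) (c y)))" using canti[OF m cQ[OF x] mt1[OF cQ[OF x] cQ[OF y]]] cc x by simp
  moreover have "le y (c (mt Q le (c x) (c y)))" using canti[OF m cQ[OF y] mt2[OF cQ[OF x] cQ[OF y]]] cc y by simp
  ultimately have "le (jn Q le x y) (c (mt Q le (c x) (c y)))" using jn_least x y cQ[OF m] by auto
  thus "le (mt Q le (c x) (c y)) (c (jn Q le x y))"
    using canti[OF jnQ[OF x y] cQ[OF m]] cc[OF m] by simp
qed

lemma demorgan_mt: assumes x: "x \<in> Q" and y: "y \<in> Q"
  shows "c (mt Q le x y) = jn Q le (c x) (c y)"
proof -
  have "c (jn Q le (c x) (c y)) = mt Q le x y" using demorgan_jn[OF cQ[OF x] cQ[OF y]] cc x y by simp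
  hence "c (c (jn Q le (c x) (c y))) = c (mt Q le x y)" by simp
  thus ?thesis using cc jnQ cQ x y by simp
qed

lemma dual_oml:
  assumes oml: "\<forall>x\<in>Q. \<forall>y\<in>Q. jn Q le x y = jn Q le (mt Q le (jn Q le x y) (c y)) y"
    and a: "a \<in> Q" and b: "b \<in> Q" and ab: "le a b"
  shows "mt Q le b (jn Q le a (c b)) = a"
proof -
  have ca: "c a \<in> Q" and cb: "c b \<in> Q" using cQ a b by auto
  have le': "le (c b) (c a)" using canti a b ab by auto
  have j: "jn Q le (c a) (c b) = c a" using jn_absorb ca cb le' by auto
  have "c a = jn Q le (mt Q le (c a) b) (c b)" using oml[rule_format, OF ca cb] j cc b by simp
  also have "\<dots> = jn Q le (c b) (mt Q le (c a) b)" by (rule jn_comm)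
  finally have e: "c a = jn Q le (c b) (mt Q le (c a) b)" .
  have "c (mt Q le b (jn Q le a (c b))) = jn Q le (c b) (c (jn Q le a (c b)))"
    using demorgan_mt b jnQ a cb by auto
  also have "\<dots> = jn Q le (c b) (mt Q le (c a) b)" using demorgan_jn[OF a cb] cc b by simp
  finally have "c (mt Q le b (jn Q le a (c b))) = c a" using e by simp
  hence "c (c (mt Q le b (jn Q le a (c b)))) = c (c a)" by simp
  thus ?thesis using cc a mtQ b jnQ cb by simp
qed

end

lemma partB:
  assumes fin: "finite Q" and oml: "orthomodular_lattice Q le c z t"
    and dd: "cc_doubly_dense Q le c z t X"
  shows "finite X \<and> pseudo_orthomodular X le c z t"
proof -
  have lcq: "lattice_compl Q le c z t" using oml unfolding orthomodular_lattice_def by blast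
  interpret lc Q le c z t by (rule lc.intro[OF lcq])
  have omlaw: "\<forall>x\<in>Q. \<forall>y\<in>Q. jn Q le x y = jn Q le (mt Q le (jn Q le x y) (c y)) y"
    using oml unfolding orthomodular_lattice_def by blast
  have XQ: "X \<subseteq> Q" and dens: "\<forall>a\<in>Q. is_sup Q le (lbs Q le {a} \<inter> X) a \<and> is_inf Q le (ubs Q le {a} \<inter> X) a"
    and cX: "\<forall>x\<in>X. c x \<in> X" and zX: "z \<in> X" and tX: "t \<in> X"
    using dd unfolding cc_doubly_dense_def by auto
  have dsup: "\<And>a u. a \<in> Q \<Longrightarrow> u \<in> Q \<Longrightarrow> (\<forall>v\<in>X. le v a \<longrightarrow> le v u) \<Longrightarrow> le a u"
  proof -
    fix a u assume a: "a \<in> Q" and u: "u \<in> Q" and h: "\<forall>v\<in>X. le v a \<longrightarrow> le v u"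
    have "u \<in> ubs Q le (lbs Q le {a} \<inter> X)" using u h unfolding ubs_def lbs_def by auto
    thus "le a u" using dens a unfolding is_sup_def by blast
  qed
  have dinf: "\<And>a l. a \<in> Q \<Longrightarrow> l \<in> Q \<Longrightarrow> (\<forall>v\<in>X. le a v \<longrightarrow> le l v) \<Longrightarrow> le l a"
  proof -
    fix a l assume a: "a \<in> Q" and l: "l \<in> Q" and h: "\<forall>v\<in>X. le a v \<longrightarrow> le l v"
    have "l \<in> lbs Q le (ubs Q le {a} \<inter> X)" using l h unfolding ubs_def lbs_def by auto
    thus "le l a" using dens a unfolding is_inf_def by blast
  qed
  have pcX: "poset_compl X le c z t"
    unfolding poset_compl_def
  proof (intro conjI ballI impI)
    show "partial_order_on' X le" using po XQ unfolding partial_order_on'_def by blast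
    show "z \<in> X" "t \<in> X" by fact+
    fix x assume x: "x \<in> X"
    hence xq: "x \<in> Q" using XQ by auto
    show "le z x" "le x t" using zle let_ xq by auto
    show "c x \<in> X" using cX x by auto
    show "c (c x) = x" using cc xq by auto
    show "lbs X le {x, c x} = {z}"
    proof -
      have "lbs X le {x, c x} \<subseteq> lbs Q le {x, c x}" using XQ unfolding lbs_def by auto
      moreover have "z \<in> lbs X le {x, c x}" using zX zle xq cQ unfolding lbs_def by auto
      ultimately show ?thesis using lbc[OF xq] by auto
    qed
    show "ubs X le {x, c x} = {t}"
    proof -
      have "ubs X le {x, c x} \<subseteq> ubs Q le {x, c x}" using XQ unfolding ubs_def by auto
      moreover have "t \<in> ubs X le {x, c x}" using tX let_ xq cQ unfolding ubs_def by auto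
      ultimately show ?thesis using ubc[OF xq] by auto
    qed
  next
    fix x y assume "x \<in> X" "y \<in> X" "le x y"
    thus "le (c y) (c x)" using canti XQ by auto
  qed
  have law: "\<forall>x\<in>X. \<forall>y\<in>X. lbs X le (ubs X le (lbs X le {x, y} \<union> {c y}) \<union> {y}) = lbs X le {x, y}"
  proof (intro ballI)
    fix x y assume xX: "x \<in> X" and yX: "y \<in> X"
    have x: "x \<in> Q" and y: "y \<in> Q" using xX yX XQ by auto
    have cy: "c y \<in> Q" using cQ y by auto
    define m where "m = mt Q le x y"
    have m: "m \<in> Q" unfolding m_def using mtQ x y by auto
    define w where "w = jn Q le m (c y)"
    have w: "w \<in> Q" unfolding w_def using jnQ m cy by auto
    have my: "le m y" unfolding m_def using mt2 x y by auto
    have key: "mt Q le y w = m" unfolding w_def by (rule dual_oml[OF omlaw m y my])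
    have L1: "lbs X le {x, y} = {v \<in> X. le v m}"
    proof (intro set_eqI iffI)
      fix v assume "v \<in> lbs X le {x, y}"
      hence v: "v \<in> X" "le v x" "le v y" unfolding lbs_def by auto
      thus "v \<in> {v \<in> X. le v m}" unfolding m_def using mt_greatest x y XQ by auto
    next
      fix v assume "v \<in> {v \<in> X. le v m}"
      hence v: "v \<in> X" "le v m" by auto
      have vq: "v \<in> Q" using v XQ by auto
      have "le v x" "le v y" unfolding m_def using trans[OF vq m] v mt1 mt2 x y m_def by auto
      thus "v \<in> lbs X le {x, y}" using v unfolding lbs_def by auto
    qed
    have U1: "ubs X le (lbs X le {x, y} \<union> {c y}) = {u \<in> X. le w u}"
    proof (intro set_eqI iffI)
      fix u assume "u \<in> ubs X le (lbs X le {x, y} \<union> {c y})"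
      hence u: "u \<in> X" "\<forall>v\<in>X. le v m \<longrightarrow> le v u" "le (c y) u" using L1 unfolding ubs_def by auto
      have uq: "u \<in> Q" using u XQ by auto
      have "le m u" using dsup[OF m uq] u by auto
      hence "le w u" unfolding w_def using jn_least m cy uq u by auto
      thus "u \<in> {u \<in> X. le w u}" using u by auto
    next
      fix u assume "u \<in> {u \<in> X. le w u}"
      hence u: "u \<in> X" "le w u" by auto
      have uq: "u \<in> Q" using u XQ by auto
      have "le m u" using trans[OF m w uq] jn1[OF m cy] u w_def by auto
      moreover have "le (c y) u" using trans[OF cy w uq] jn2[OF m cy] u w_def by auto
      ultimately have "\<forall>v\<in>X. le v m \<longrightarrow> le v u" using trans m uq XQ by blast
      thus "u \<in> ubs X le (lbs X le {x, y} \<union> {c y})" using L1 u \<open>le (c y) u\<close> unfolding ubs_def by auto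
    qed
    show "lbs X le (ubs X le (lbs X le {x, y} \<union> {c y}) \<union> {y}) = lbs X le {x, y}"
    proof (intro set_eqI iffI)
      fix v assume "v \<in> lbs X le (ubs X le (lbs X le {x, y} \<union> {c y}) \<union> {y})"
      hence v: "v \<in> X" "\<forall>u\<in>X. le w u \<longrightarrow> le v u" "le v y" using U1 unfolding lbs_def by auto
      have vq: "v \<in> Q" using v XQ by auto
      have "le v w" using dinf[OF w vq] v by auto
      hence "le v m" using mt_greatest[OF y w vq] v key by auto
      thus "v \<in> lbs X le {x, y}" using L1 v by auto
    next
      fix v assume "v \<in> lbs X le {x, y}"
      hence v: "v \<in> X" "le v m" using L1 by auto
      have vq: "v \<in> Q" using v XQ by auto
      have vy: "le v y" using trans[OF vq m y] v my by auto
      have "le m w" unfolding w_def using jn1 m cy by auto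
      hence "\<forall>u\<in>X. le w u \<longrightarrow> le v u" using trans vq m w XQ v by (meson subsetD)
      thus "v \<in> lbs X le (ubs X le (lbs X le {x, y} \<union> {c y}) \<union> {y})"
        using U1 v vy unfolding lbs_def by auto
    qed
  qed
  show ?thesis using pcX law finite_subset[OF XQ fin] unfolding pseudo_orthomodular_def by blast
qed


theorem theorem8:
  shows "(\<forall>(P :: 'a set) le c z t. finite P \<and> pseudo_orthomodular P le c z t \<longrightarrow>
            (\<exists>(Q :: 'a set set) leQ cQ zQ tQ X f.
               finite Q \<and> orthomodular_lattice Q leQ cQ zQ tQ \<and>
               cc_doubly_dense Q leQ cQ zQ tQ X \<and>
               bij_betw f P X \<and>
               (\<forall>x\<in>P. \<forall>y\<in>P. le x y \<longleftrightarrow> leQ (f x) (f y)) \<and>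
               (\<forall>x\<in>P. f (c x) = cQ (f x)) \<and> f z = zQ \<and> f t = tQ))
       \<and> (\<forall>(Q :: 'b set) le c z t X. finite Q \<and> orthomodular_lattice Q le c z t \<and>
            cc_doubly_dense Q le c z t X \<longrightarrow>
              finite X \<and> pseudo_orthomodular X le c z t)"
proof (rule conjI)
  show "\<forall>(P :: 'a set) le c z t. finite P \<and> pseudo_orthomodular P le c z t \<longrightarrow>
            (\<exists>(Q :: 'a set set) leQ cQ zQ tQ X f.
               finite Q \<and> orthomodular_lattice Q leQ cQ zQ tQ \<and>
               cc_doubly_dense Q leQ cQ zQ tQ X \<and>
               bij_betw f P X \<and>
               (\<forall>x\<in>P. \<forall>y\<in>P. le x y \<longleftrightarrow> leQ (f x) (f y)) \<and>
               (\<forall>x\<in>P. f (c x) = cQ (f x)) \<and> f z = zQ \<and> f t = tQ)"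
  proof (intro allI impI)
  fix P :: "'a set" and le c z t
  assume h: "finite P \<and> pseudo_orthomodular P le c z t"
  have fin: "finite P" and pp: "pseudo_orthomodular P le c z t" using h by simp_all
  interpret pom P le c z t by (rule pom.intro[OF pp])
  show "\<exists>(Q :: 'a set set) leQ cQ zQ tQ X f.
               finite Q \<and> orthomodular_lattice Q leQ cQ zQ tQ \<and>
               cc_doubly_dense Q leQ cQ zQ tQ X \<and>
               bij_betw f P X \<and>
               (\<forall>x\<in>P. \<forall>y\<in>P. le x y \<longleftrightarrow> leQ (f x) (f y)) \<and>
               (\<forall>x\<in>P. f (c x) = cQ (f x)) \<and> f z = zQ \<and> f t = tQ"
    by (rule partA[OF fin])
  qed
next
  show "\<forall>(Q :: 'b set) le c z t X. finite Q \<and> orthomodular_lattice Q le c z t \<and>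
            cc_doubly_dense Q le c z t X \<longrightarrow>
              finite X \<and> pseudo_orthomodular X le c z t"
  proof (intro allI impI)
  fix Q :: "'b set" and le c z t X
  assume h2: "finite Q \<and> orthomodular_lattice Q le c z t \<and> cc_doubly_dense Q le c z t X"
  show "finite X \<and> pseudo_orthomodular X le c z t"
    by (rule partB[of Q]) (use h2 in simp_all)
  qed
qed

end
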